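(* In the two-superobserver, two-friend extended Wigner's friend scenario (defined in the context), there exists a superobserver possibility set $S \subseteq \{0,1\}^2\times\{1,2\}^2$ that satisfies Possibilistic No-Signalling but admits no Possibilistic Local Friendliness model. That is, there is no set $T\subseteq\{0,1\}^4\times\{1,2\}^2$ that is a Possibilistic Local Friendliness model reproducing $S$.
   Context: Scenario. Two space-like separated superobservers, Alice and Bob, have friends Charlie and Debbie respectively. Each friend measures a system inside a sealed laboratory. - Charlie and Debbie record outcomes $C=c\in\{0,1\}$ and $D=d\in\{0,1\}$. - Alice chooses an intervention (setting) $X=x\in\{1,2\}$ and observes $A=a\in\{0,1\}$. Bob chooses $Y=y\in\{1,2\}$ and observes $B=b\in\{0,1\}$. - The setting $X=1$ means Alice opens Charlie's lab, asks for his result and sets $A=C$. The setting $Y=1$ means Bob asks Debbie and sets $B=D$. The settings $X=2$ and $Y=2$ are arbitrary other measurements. - Spacetime relations: $A$ lies in the future light cone of $X$, and $B$ lies in the future light cone of $Y$. $X$ is not in the past light cone of any of $B,Y,C,D$. $Y$ is not in the past light cone of any of $A,X,C,D$. Superobserver possibility set. This is a set $S$ of tuples $(a,b,x,y)$; its elements are the tuples called possible. $S$ satisfies Possibilistic No-Signalling (PNS) when both of the following hold: - For all $x,a$, whether some $b$ has $(a,b,x,y)\in S$ does not depend on $y$. - For all $y,b$, whether some $a$ has $(a,b,x,y)\in S$ does not depend on $x$. Possibilistic Local Friendliness (PLF) model. This is the conjunction of Absoluteness of Observed Events and Possibilistic Local Agency, formalized as follows. - Absoluteness of Observed Events (AOE):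 every observed event has a single absolute value. Accordingly, the model is a set $T$ of possible joint value assignments $(a,b,c,d,x,y)$ to all six variables. - Protocol constraint: every $t\in T$ with $x=1$ has $a=c$, and every $t\in T$ with $y=1$ has $b=d$. - A partial assignment $E$ (values for some subset of the variables) is called possible if it agrees with some element of $T$. - Possibilistic Local Agency (PLA): if $E$ is possible, then for any intervention $Z\in\{X,Y\}$ not in the past light cone of any variable assigned in $E$, and for every value $z$ of $Z$, the assignment $E$ together with $Z=z$ is possible. - Reproducing $S$: the projection of $T$ onto the coordinates $(a,b,x,y)$ equals $S$. *)

theory Defs
  imports Main
begin

text \<open>Outcomes a,b,c,d range over {0,1}; settings x,y range over {1,2} (as naturals).
  A superobserver possibility set is a set of tuples (a,b,x,y);
  a full joint assignment is a tuple (a,b,c,d,x,y).\<close>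

definition outcomes :: "nat set" where "outcomes = {0,1}"
definition settings :: "nat set" where "settings = {1,2}"

definition SO_space :: "(nat \<times> nat \<times> nat \<times> nat) set" where
  "SO_space = outcomes \<times> outcomes \<times> settings \<times> settings"

definition full_space :: "(nat \<times> nat \<times> nat \<times> nat \<times> nat \<times> nat) set" where
  "full_space = outcomes \<times> outcomes \<times> outcomes \<times> outcomes \<times> settings \<times> settings"

definition PNS :: "(nat \<times> nat \<times> nat \<times> nat) set \<Rightarrow> bool" where
  "PNS S \<longleftrightarrow>
     (\<forall>x\<in>settings. \<forall>a\<in>outcomes. \<forall>y\<in>settings. \<forall>y'\<in>settings.
        (\<exists>b. (a,b,x,y) \<in> S) \<longleftrightarrow> (\<exists>b. (a,b,x,y') \<in> S)) \<and>
     (\<forall>y\<in>settings. \<forall>b\<in>outcomes. \<forall>x\<in>settings. \<forall>x'\<in>settings.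
        (\<exists>a. (a,b,x,y) \<in> S) \<longleftrightarrow> (\<exists>a. (a,b,x',y) \<in> S))"

datatype var = VA | VB | VC | VD | VX | VY

fun val :: "nat \<times> nat \<times> nat \<times> nat \<times> nat \<times> nat \<Rightarrow> var \<Rightarrow> nat" where
  "val (a,b,c,d,x,y) VA = a"
| "val (a,b,c,d,x,y) VB = b"
| "val (a,b,c,d,x,y) VC = c"
| "val (a,b,c,d,x,y) VD = d"
| "val (a,b,c,d,x,y) VX = x"
| "val (a,b,c,d,x,y) VY = y"

definition agrees :: "(var \<Rightarrow> nat option) \<Rightarrow> nat \<times> nat \<times> nat \<times> nat \<times> nat \<times> nat \<Rightarrow> bool" where
  "agrees E t \<longleftrightarrow> (\<forall>v u. E v = Some u \<longrightarrow> val t v = u)"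

definition possible :: "(nat \<times> nat \<times> nat \<times> nat \<times> nat \<times> nat) set \<Rightarrow> (var \<Rightarrow> nat option) \<Rightarrow> bool" where
  "possible T E \<longleftrightarrow> (\<exists>t\<in>T. agrees E t)"

text \<open>Variables V such that X (resp. Y) is NOT in the past light cone of V.
  X is in the past light cone of A (and of itself); Y of B (and of itself).\<close>
definition not_future_X :: "var set" where "not_future_X = {VB, VY, VC, VD}"
definition not_future_Y :: "var set" where "not_future_Y = {VA, VX, VC, VD}"

definition PLA :: "(nat \<times> nat \<times> nat \<times> nat \<times> nat \<times> nat) set \<Rightarrow> bool" where
  "PLA T \<longleftrightarrow> (\<forall>E. possible T E \<longrightarrow>
     (dom E \<subseteq> not_future_X \<longrightarrow> (\<forall>z\<in>settings. possible T (E(VX \<mapsto> z)))) \<and>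
     (dom E \<subseteq> not_future_Y \<longrightarrow> (\<forall>z\<in>settings. possible T (E(VY \<mapsto> z)))))"

definition protocol :: "(nat \<times> nat \<times> nat \<times> nat \<times> nat \<times> nat) set \<Rightarrow> bool" where
  "protocol T \<longleftrightarrow> (\<forall>(a,b,c,d,x,y)\<in>T. (x = 1 \<longrightarrow> a = c) \<and> (y = 1 \<longrightarrow> b = d))"

definition proj_SO :: "(nat \<times> nat \<times> nat \<times> nat \<times> nat \<times> nat) set \<Rightarrow> (nat \<times> nat \<times> nat \<times> nat) set" where
  "proj_SO T = (\<lambda>(a,b,c,d,x,y). (a,b,x,y)) ` T"

text \<open>T is a PLF model (AOE: a set of joint assignments; protocol; PLA) reproducing S.\<close>
definition PLF_model :: "(nat \<times> nat \<times> nat \<times> nat \<times> nat \<times> nat) set \<Rightarrow> (nat \<times> nat \<times> nat \<times> nat) set \<Rightarrow> bool" where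
  "PLF_model T S \<longleftrightarrow> T \<subseteq> full_space \<and> protocol T \<and> PLA T \<and> proj_SO T = S"

end

theory Submission
  imports Defs
begin

definition hardyS :: "(nat \<times> nat \<times> nat \<times> nat) set" where
  "hardyS = {(0,0,1,1),(0,1,1,1),(1,0,1,1),
             (0,1,1,2),(1,0,1,2),(1,1,1,2),
             (0,1,2,1),(1,0,2,1),(1,1,2,1),
             (0,0,2,2),(0,1,2,2),(1,0,2,2),(1,1,2,2)}"

lemma agreesD: "agrees E t \<Longrightarrow> E v = Some u \<Longrightarrow> val t v = u"
  by (simp add: agrees_def)

lemma agrees_tuple:
  assumes "\<And>v u. E v = Some u \<Longrightarrow> val (a,b,c,d,x,y) v = u"
  shows "agrees E (a,b,c,d,x,y)"
  using assms by (simp add: agrees_def)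

lemma no_model: "\<not> PLF_model T hardyS"
proof
  assume M: "PLF_model T hardyS"
  hence sub: "T \<subseteq> full_space" and prot: "protocol T" and pla: "PLA T"
    and pr: "proj_SO T = hardyS" by (auto simp: PLF_model_def)
  have inS: "(a,b,x,y) \<in> hardyS" if "(a,b,c,d,x,y) \<in> T" for a b c d x y
    using that pr unfolding proj_SO_def by force
  have protD: "(x = 1 \<longrightarrow> a = c) \<and> (y = 1 \<longrightarrow> b = d)" if "(a,b,c,d,x,y) \<in> T" for a b c d x y
    using that prot unfolding protocol_def by fastforce
  have "(0,0,2,2) \<in> proj_SO T" using pr by (simp add: hardyS_def)
  then obtain c d where t0: "(0,0,c,d,2,2) \<in> T" unfolding proj_SO_def by force
  have cd: "c \<in> {0,1}" "d \<in> {0,1}" using t0 sub by (auto simp: full_space_def outcomes_def)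
  let ?E1 = "(Map.empty(VB \<mapsto> 0, VY \<mapsto> 2, VC \<mapsto> c, VD \<mapsto> d)) :: var \<Rightarrow> nat option"
  have "possible T ?E1" unfolding possible_def
    by (rule bexI[OF _ t0], rule agrees_tuple, auto split: if_splits)
  moreover have "dom ?E1 \<subseteq> not_future_X" by (auto simp: not_future_X_def)
  ultimately have "possible T (?E1(VX \<mapsto> 1))" using pla by (auto simp: PLA_def settings_def)
  then obtain t where t: "t \<in> T" "agrees (?E1(VX \<mapsto> 1)) t" by (auto simp: possible_def)
  obtain a1 b1 c1 d1 x1 y1 where teq: "t = (a1,b1,c1,d1,x1,y1)" by (cases t) auto
  have "b1 = 0" "y1 = 2" "c1 = c" "d1 = d" "x1 = 1"
    using agreesD[OF t(2), of VB] agreesD[OF t(2), of VY] agreesD[OF t(2), of VC]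
      agreesD[OF t(2), of VD] agreesD[OF t(2), of VX] teq by auto
  with t(1) teq have "(c,0,c,d,1,2) \<in> T" using protD[of a1 b1 c1 d1 x1 y1] by auto
  hence "(c,0,1,2) \<in> hardyS" by (rule inS)
  with cd have c1: "c = 1" by (auto simp: hardyS_def)
  let ?E2 = "(Map.empty(VA \<mapsto> 0, VX \<mapsto> 2, VC \<mapsto> c, VD \<mapsto> d)) :: var \<Rightarrow> nat option"
  have "possible T ?E2" unfolding possible_def
    by (rule bexI[OF _ t0], rule agrees_tuple, auto split: if_splits)
  moreover have "dom ?E2 \<subseteq> not_future_Y" by (auto simp: not_future_Y_def)
  ultimately have "possible T (?E2(VY \<mapsto> 1))" using pla by (auto simp: PLA_def settings_def)
  then obtain s where s: "s \<in> T" "agrees (?E2(VY \<mapsto> 1)) s" by (auto simp: possible_def)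
  obtain a2 b2 c2 d2 x2 y2 where seq: "s = (a2,b2,c2,d2,x2,y2)" by (cases s) auto
  have "a2 = 0" "x2 = 2" "c2 = c" "d2 = d" "y2 = 1"
    using agreesD[OF s(2), of VA] agreesD[OF s(2), of VY] agreesD[OF s(2), of VC]
      agreesD[OF s(2), of VD] agreesD[OF s(2), of VX] seq by auto
  with s(1) seq have "(0,d,c,d,2,1) \<in> T" using protD[of a2 b2 c2 d2 x2 y2] by auto
  hence "(0,d,2,1) \<in> hardyS" by (rule inS)
  with cd have d1: "d = 1" by (auto simp: hardyS_def)
  let ?E3 = "(Map.empty(VC \<mapsto> 1, VD \<mapsto> 1)) :: var \<Rightarrow> nat option"
  have "possible T ?E3" unfolding possible_def using c1 d1
    by (intro bexI[OF _ t0], intro agrees_tuple, auto split: if_splits)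
  moreover have "dom ?E3 \<subseteq> not_future_X" by (auto simp: not_future_X_def)
  ultimately have p4: "possible T (?E3(VX \<mapsto> 1))" using pla by (auto simp: PLA_def settings_def)
  have "dom (?E3(VX \<mapsto> 1)) \<subseteq> not_future_Y" by (auto simp: not_future_Y_def)
  with p4 have "possible T (?E3(VX \<mapsto> 1, VY \<mapsto> 1))" using pla by (auto simp: PLA_def settings_def)
  then obtain r where r: "r \<in> T" "agrees (?E3(VX \<mapsto> 1, VY \<mapsto> 1)) r" by (auto simp: possible_def)
  obtain a3 b3 c3 d3 x3 y3 where req: "r = (a3,b3,c3,d3,x3,y3)" by (cases r) auto
  have "c3 = 1" "d3 = 1" "x3 = 1" "y3 = 1"
    using agreesD[OF r(2), of VC] agreesD[OF r(2), of VD] agreesD[OF r(2), of VX]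
      agreesD[OF r(2), of VY] req by auto
  with r(1) req have "(1,1,1,1,1,1) \<in> T" using protD[of a3 b3 c3 d3 x3 y3] by auto
  hence "(1,1,1,1) \<in> hardyS" by (rule inS)
  thus False by (simp add: hardyS_def)
qed

theorem theorem4:
  shows "\<exists>S. S \<subseteq> SO_space \<and> PNS S \<and> \<not> (\<exists>T. PLF_model T S)"
proof (intro exI conjI)
  show "hardyS \<subseteq> SO_space"
    by (simp add: hardyS_def SO_space_def outcomes_def settings_def)
  show "PNS hardyS"
    unfolding PNS_def hardyS_def outcomes_def settings_def by auto
  show "\<not> (\<exists>T. PLF_model T hardyS)" using no_model by blast
qed

end
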